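(* Let $n\ge 1$, $m\ge 2$, $0\le k\le n-1$, and let $\overline{\mathcal{C}}^k_{ac}$ be the class of all complete and all incomplete acyclic $k$-bounded CP-nets over $n$ variables with $m$ values each, over the instance space $\overline{\mathcal{X}}_{swap}$. Then: (1) $\mathrm{VCD}(\overline{\mathcal{C}}^{n-1}_{ac})=m^n-1$; (2) $\mathrm{VCD}(\overline{\mathcal{C}}^{0}_{ac})=(m-1)n$; (3) $\mathrm{VCD}(\overline{\mathcal{C}}^{k}_{ac})\ge(m-1)\mathcal{M}_k=(m-1)(n-k)m^k+m^k-1$.
   Context: Variables $V=\{v_1,\dots,v_n\}$, each with a finite domain of size $m$. An outcome assigns a value to every variable; $\mathcal{O}_X$ denotes assignments to $X\subseteq V$. A CP-net specifies for each $v_i$ a parent set $Pa(v_i)\subseteq V\setminus\{v_i\}$ and, for each context $\gamma\in\mathcal{O}_{Pa(v_i)}$, either a strict total order $\succ^{v_i}_\gamma$ on $D_{v_i}$ or nothing (complete if always given, incomplete otherwise); parents are non-dummy. Acyclic: parent graph (edges $(v_j,v_i)$, $v_j\in Pa(v_i)$) acyclic; $k$-bounded: all $|Pa(v_i)|\le k$. Improving flip from $o$ to $o'$ (differing only in $v_i$): $\succ^{v_i}_{o[Pa(v_i)]}$ is given and $o'[v_i]\succ^{v_i}_{o[Pa(v_i)]}o[v_i]$; $o'\succ o$ iff a nonempty sequence of improving flips leads from $o$ to $o'$. $\overline{\mathcal{X}}_{swap}$ is the set of all ordered pairs $x=(x.1,x.2)$ of outcomes differing in exactly one variable; a CP-net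 $N$ is the concept $c_N(x)=1$ iff $x.1\succ x.2$ under $N$. VCD is the largest size of a set on which all labelings are realized by the class. $\mathcal{M}_k=(n-k)m^k+\frac{m^k-1}{m-1}$. *)

theory Defs
  imports Main
begin

definition outcomes :: "nat \<Rightarrow> nat \<Rightarrow> nat list set" where
  "outcomes n m = {xs. length xs = n \<and> (\<forall>x\<in>set xs. x < m)}"

text \<open>A CP-net is a pair (Pa, cpt): Pa i is the parent set of v_i, and
  cpt i u is the (optional) order on the domain of v_i in the context u[Pa i];
  it is indexed by a full outcome but required to depend only on u[Pa i].
  A relation r with r a b means "a is preferred to b".\<close>

type_synonym cpnet = "(nat \<Rightarrow> nat set) \<times> (nat \<Rightarrow> nat list \<Rightarrow> (nat \<Rightarrow> nat \<Rightarrow> bool) option)"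

definition strict_total_on :: "nat \<Rightarrow> (nat \<Rightarrow> nat \<Rightarrow> bool) \<Rightarrow> bool" where
  "strict_total_on m r \<longleftrightarrow>
     (\<forall>a b. r a b \<longrightarrow> a < m \<and> b < m) \<and>
     (\<forall>a. \<not> r a a) \<and>
     (\<forall>a b c. r a b \<longrightarrow> r b c \<longrightarrow> r a c) \<and>
     (\<forall>a<m. \<forall>b<m. a \<noteq> b \<longrightarrow> r a b \<or> r b a)"

definition is_cpnet :: "nat \<Rightarrow> nat \<Rightarrow> cpnet \<Rightarrow> bool" where
  "is_cpnet n m N \<longleftrightarrow>
     (\<forall>i<n. fst N i \<subseteq> {..<n} - {i}) \<and>
     (\<forall>i<n. \<forall>u\<in>outcomes n m. \<forall>r. snd N i u = Some r \<longrightarrow> strict_total_on m r) \<and>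
     (\<forall>i<n. \<forall>u\<in>outcomes n m. \<forall>u'\<in>outcomes n m.
         (\<forall>j\<in>fst N i. u ! j = u' ! j) \<longrightarrow> snd N i u = snd N i u') \<and>
     \<comment> \<open>parents are non-dummy\<close>
     (\<forall>i<n. \<forall>j\<in>fst N i. \<exists>u\<in>outcomes n m. \<exists>u'\<in>outcomes n m.
         (\<forall>l\<in>fst N i - {j}. u ! l = u' ! l) \<and> snd N i u \<noteq> snd N i u')"

definition parent_graph :: "nat \<Rightarrow> cpnet \<Rightarrow> (nat \<times> nat) set" where
  "parent_graph n N = {(j, i). i < n \<and> j \<in> fst N i}"

definition acyclic_cpnet :: "nat \<Rightarrow> cpnet \<Rightarrow> bool" where
  "acyclic_cpnet n N \<longleftrightarrow> acyclic (parent_graph n N)"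

definition k_bounded :: "nat \<Rightarrow> nat \<Rightarrow> cpnet \<Rightarrow> bool" where
  "k_bounded n k N \<longleftrightarrow> (\<forall>i<n. card (fst N i) \<le> k)"

definition improving_flip :: "nat \<Rightarrow> nat \<Rightarrow> cpnet \<Rightarrow> (nat list \<times> nat list) set" where
  "improving_flip n m N = {(u, u'). u \<in> outcomes n m \<and> u' \<in> outcomes n m \<and>
     (\<exists>i<n. (\<forall>j. j \<noteq> i \<longrightarrow> u ! j = u' ! j) \<and>
        (\<exists>r. snd N i u = Some r \<and> r (u' ! i) (u ! i)))}"

definition preferred :: "nat \<Rightarrow> nat \<Rightarrow> cpnet \<Rightarrow> nat list \<Rightarrow> nat list \<Rightarrow> bool" where
  "preferred n m N u' u \<longleftrightarrow> (u, u') \<in> (improving_flip n m N)\<^sup>+"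

definition swap_instances :: "nat \<Rightarrow> nat \<Rightarrow> (nat list \<times> nat list) set" where
  "swap_instances n m = {(x1, x2). x1 \<in> outcomes n m \<and> x2 \<in> outcomes n m \<and>
      card {i. i < n \<and> x1 ! i \<noteq> x2 ! i} = 1}"

definition concept :: "nat \<Rightarrow> nat \<Rightarrow> cpnet \<Rightarrow> (nat list \<times> nat list) set" where
  "concept n m N = {x \<in> swap_instances n m. preferred n m N (fst x) (snd x)}"

definition acyclic_k_class :: "nat \<Rightarrow> nat \<Rightarrow> nat \<Rightarrow> (nat list \<times> nat list) set set" where
  "acyclic_k_class n m k =
     {concept n m N | N. is_cpnet n m N \<and> acyclic_cpnet n N \<and> k_bounded n k N}"

definition shatters :: "'a set set \<Rightarrow> 'a set \<Rightarrow> bool" where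
  "shatters C S \<longleftrightarrow> (\<forall>T\<subseteq>S. \<exists>c\<in>C. c \<inter> S = T)"

definition VCD :: "'a set set \<Rightarrow> 'a set \<Rightarrow> nat" where
  "VCD C X = Max {card S | S. S \<subseteq> X \<and> finite S \<and> shatters C S}"

definition M_k :: "nat \<Rightarrow> nat \<Rightarrow> nat \<Rightarrow> nat" where
  "M_k n m k = (n - k) * m ^ k + (m ^ k - 1) div (m - 1)"

end

theory Submission
  imports Defs "HOL-Library.Transitive_Closure_Table"
begin

lemma nth_beyond: "length a = length b \<Longrightarrow> length a \<le> j \<Longrightarrow> a ! j = b ! j"
proof (induction a arbitrary: b j)
  case Nil then show ?case by simp
next
  case (Cons x xs)
  then obtain y ys where b: "b = y # ys" by (cases b) auto
  from Cons.prems obtain j' where j: "j = Suc j'" by (cases j) auto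
  show ?case using Cons b j by simp
qed

lemma chain_contra:
  fixes g :: "nat \<Rightarrow> 'a" and R :: "'a \<Rightarrow> 'a \<Rightarrow> bool"
  assumes trans: "\<And>a b c. R a b \<Longrightarrow> R b c \<Longrightarrow> R a c"
    and irr: "\<And>a. \<not> R a a"
    and closed: "g L = g 0"
    and steps: "\<And>t. t < L \<Longrightarrow> g (Suc t) = g t \<or> R (g (Suc t)) (g t)"
    and strict: "tz < L" "R (g (Suc tz)) (g tz)"
  shows False
proof -
  have inv: "t \<le> L \<Longrightarrow> (g t = g 0 \<and> (\<forall>s<t. \<not> R (g (Suc s)) (g s))) \<or> R (g t) (g 0)" for t
  proof (induction t)
    case 0 then show ?case by simp
  next
    case (Suc t)
    then have IH: "(g t = g 0 \<and> (\<forall>s<t. \<not> R (g (Suc s)) (g s))) \<or> R (g t) (g 0)" by simp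
    have st: "g (Suc t) = g t \<or> R (g (Suc t)) (g t)" using steps Suc.prems by simp
    show ?case
    proof (cases "R (g (Suc t)) (g t)")
      case True
      then show ?thesis using IH trans by metis
    next
      case False
      then have "g (Suc t) = g t" using st by simp
      then show ?thesis using IH False less_Suc_eq by auto
    qed
  qed
  from inv[of L] show False using closed strict irr by auto
qed

definition adjr :: "('e \<Rightarrow> 'v \<times> 'v) \<Rightarrow> 'e set \<Rightarrow> ('v \<times> 'v) set" where
  "adjr ends F = ends ` F \<union> (ends ` F)\<inverse>"

definition forest :: "('e \<Rightarrow> 'v \<times> 'v) \<Rightarrow> 'e set \<Rightarrow> bool" where
  "forest ends E \<longleftrightarrow> (\<forall>e\<in>E. ends e \<notin> (adjr ends (E - {e}))\<^sup>*)"

lemma forest_card: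
  assumes "finite V" "V \<noteq> {}" "finite E" "\<forall>e\<in>E. fst (ends e) \<in> V \<and> snd (ends e) \<in> V"
    "forest ends E"
  shows "card E \<le> card V - 1"
  using assms
proof (induction "card V" arbitrary: V E ends rule: less_induct)
  case less
  show ?case
  proof (cases "E = {}")
    case True then show ?thesis by simp
  next
    case False
    then obtain e where e: "e \<in> E" by blast
    obtain a b where ab: "ends e = (a, b)" by (cases "ends e")
    have "(a, a) \<in> (adjr ends (E - {e}))\<^sup>*" by simp
    then have ne: "a \<noteq> b" using less.prems(5) e ab unfolding forest_def by auto
    have aV: "a \<in> V" "b \<in> V" using less.prems(4) e ab by force+
    define f where "f v = (if v = b then a else v)" for v
    define ends' where "ends' x = (f (fst (ends x)), f (snd (ends x)))" for x
    define V' where "V' = V - {b}"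
    define E' where "E' = E - {e}"
    have cardV': "card V' < card V" using aV less.prems(1) unfolding V'_def
      by (intro card_Diff1_less) auto
    have V'ne: "V' \<noteq> {}" using aV ne V'_def by auto
    have ends'V: "\<forall>x\<in>E'. fst (ends' x) \<in> V' \<and> snd (ends' x) \<in> V'"
      using less.prems(4) aV ne unfolding ends'_def f_def V'_def E'_def by auto
    have lift: "adjr ends' F \<subseteq> (adjr ends (insert e F))\<^sup>*" for F
    proof
      fix p assume "p \<in> adjr ends' F"
      then have "\<exists>x y. p = (f x, f y) \<and> (x,y) \<in> adjr ends F"
        unfolding adjr_def[of ends'] ends'_def
      proof (elim UnE)
        assume "p \<in> (\<lambda>x. (f (fst (ends x)), f (snd (ends x)))) ` F"
        then obtain z where "z \<in> F" "p = (f (fst (ends z)), f (snd (ends z)))" by auto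
        then have "p = (f (fst (ends z)), f (snd (ends z))) \<and> (fst (ends z), snd (ends z)) \<in> adjr ends F" unfolding adjr_def by force
        then show ?thesis unfolding adjr_def by blast
      next
        assume "p \<in> ((\<lambda>x. (f (fst (ends x)), f (snd (ends x)))) ` F)\<inverse>"
        then obtain z where "z \<in> F" "p = (f (snd (ends z)), f (fst (ends z)))" by auto
        then have "p = (f (snd (ends z)), f (fst (ends z))) \<and> (snd (ends z), fst (ends z)) \<in> adjr ends F" unfolding adjr_def by force
        then show ?thesis unfolding adjr_def by blast
      qed
      then obtain x y where p: "p = (f x, f y)" and xy: "(x,y) \<in> adjr ends F" by blast
      let ?R = "adjr ends (insert e F)"
      have R: "(x,y) \<in> ?R" using xy unfolding adjr_def by auto
      have ab': "(a,b) \<in> ?R" "(b,a) \<in> ?R" using ab unfolding adjr_def by force+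
      have fx: "(f v, v) \<in> ?R\<^sup>*" "(v, f v) \<in> ?R\<^sup>*" for v using ab' by (auto simp: f_def)
      have "(f x, x) \<in> ?R\<^sup>*" "(x, y) \<in> ?R\<^sup>*" "(y, f y) \<in> ?R\<^sup>*" using fx R by auto
      then show "p \<in> ?R\<^sup>*" unfolding p by (meson rtrancl_trans)
    qed
    have forest': "forest ends' E'"
      unfolding forest_def
    proof
      fix e' assume e': "e' \<in> E'"
      show "ends' e' \<notin> (adjr ends' (E' - {e'}))\<^sup>*"
      proof
        assume H: "ends' e' \<in> (adjr ends' (E' - {e'}))\<^sup>*"
        have ins: "insert e (E' - {e'}) = E - {e'}" using e e' E'_def by auto
        have sub: "(adjr ends' (E' - {e'}))\<^sup>* \<subseteq> (adjr ends (E - {e'}))\<^sup>*"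
          using lift[of "E' - {e'}"] ins by (simp add: rtrancl_subset_rtrancl)
        obtain x y where xy: "ends e' = (x,y)" by (cases "ends e'")
        have H2: "(f x, f y) \<in> (adjr ends (E - {e'}))\<^sup>*" using H sub xy ends'_def by auto
        have eE: "e \<in> E - {e'}" using e e' E'_def by auto
        let ?R = "adjr ends (E - {e'})"
        have ab': "(a,b) \<in> ?R" "(b,a) \<in> ?R" using ab eE unfolding adjr_def by force+
        have fx: "(f v, v) \<in> ?R\<^sup>*" "(v, f v) \<in> ?R\<^sup>*" for v using ab' by (auto simp: f_def)
        have "(x, f x) \<in> ?R\<^sup>*" "(f y, y) \<in> ?R\<^sup>*" using fx by auto
        then have "(x,y) \<in> ?R\<^sup>*" using H2 by (meson rtrancl_trans)
        then show False using less.prems(5) e' xy E'_def unfolding forest_def by auto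
      qed
    qed
    have fV': "finite V'" using less.prems(1) V'_def by simp
    have fE': "finite E'" using less.prems(3) E'_def by simp
    have IH: "card E' \<le> card V' - 1"
      by (rule less.hyps[OF cardV' fV' V'ne fE' ends'V forest'])
    have "card E' = card E - 1" using e E'_def by simp
    moreover have "card E > 0" using e less.prems(3) by (auto simp: card_gt_0_iff)
    ultimately have "card E = card E' + 1" by linarith
    moreover have "card V' = card V - 1" using aV less.prems(1) V'_def by simp
    moreover have "card V \<ge> 2"
    proof -
      have "card {a,b} \<le> card V" using aV less.prems(1) by (intro card_mono) auto
      then show ?thesis using ne by simp
    qed
    ultimately show ?thesis using IH by linarith
  qed
qed


lemma rtrancl_path_nth:
  "rtrancl_path r x xs y \<Longrightarrow> (\<forall>t<length xs. r ((x#xs)!t) ((x#xs)!Suc t)) \<and> (x#xs) ! length xs = y"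
proof (induction rule: rtrancl_path.induct)
  case (base x) then show ?case by simp
next
  case (step x y ys z)
  show ?case
  proof (intro conjI allI impI)
    fix t assume "t < length (y # ys)"
    then show "r ((x # y # ys) ! t) ((x # y # ys) ! Suc t)"
      using step by (cases t) auto
  next
    show "(x # y # ys) ! length (y # ys) = z" using step by simp
  qed
qed

lemma cycle_of_not_forest:
  assumes "\<not> forest ends E"
  obtains L w inst where "0 < L" "w L = w 0"
    "\<And>t. t<L \<Longrightarrow> inst t \<in> E \<and> (ends (inst t) = (w t, w (Suc t)) \<or> ends (inst t) = (w (Suc t), w t))"
    "inj_on inst {..<L}"
proof -
  obtain e where e: "e \<in> E" and H: "ends e \<in> (adjr ends (E - {e}))\<^sup>*"
    using assms unfolding forest_def by blast
  obtain a b where ab: "ends e = (a,b)" by (cases "ends e")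
  let ?R = "adjr ends (E - {e})"
  have "(\<lambda>x y. (x,y) \<in> ?R)\<^sup>*\<^sup>* a b" using H ab by (simp add: rtranclp_rtrancl_eq)
  then obtain xs where "rtrancl_path (\<lambda>x y. (x,y) \<in> ?R) a xs b"
    using rtranclp_eq_rtrancl_path by metis
  then obtain ys where P: "rtrancl_path (\<lambda>x y. (x,y) \<in> ?R) a ys b" and D: "distinct (a # ys)"
    by (rule rtrancl_path_distinct)
  define K where "K = length ys"
  define vs where "vs = a # ys"
  have st: "\<forall>t<K. (vs!t, vs!Suc t) \<in> ?R" and last: "vs ! K = b"
    using rtrancl_path_nth[OF P] K_def vs_def by auto
  define w where "w t = (if t \<le> K then vs ! t else a)" for t
  define inst where "inst t = (if t < K then (SOME e'. e' \<in> E - {e} \<and>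
      (ends e' = (w t, w (Suc t)) \<or> ends e' = (w (Suc t), w t))) else e)" for t
  have instP: "inst t \<in> E \<and> (ends (inst t) = (w t, w (Suc t)) \<or> ends (inst t) = (w (Suc t), w t))
      \<and> (t < K \<longrightarrow> inst t \<noteq> e)" if "t < Suc K" for t
  proof (cases "t < K")
    case True
    have "(w t, w (Suc t)) \<in> ?R" using st True w_def by simp
    then have "\<exists>e'. e' \<in> E - {e} \<and> (ends e' = (w t, w (Suc t)) \<or> ends e' = (w (Suc t), w t))"
      unfolding adjr_def by force
    from someI_ex[OF this] show ?thesis using True unfolding inst_def by simp
  next
    case False
    then have "t = K" using that by simp
    then show ?thesis using e ab last unfolding inst_def w_def vs_def by simp
  qed
  have wdist: "s \<le> K \<Longrightarrow> t \<le> K \<Longrightarrow> w s = w t \<Longrightarrow> s = t" for s t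
    using D unfolding w_def vs_def K_def by (simp add: nth_eq_iff_index_eq del: distinct.simps)
  have inj: "inj_on inst {..<Suc K}"
  proof (rule inj_onI)
    fix s t assume s: "s \<in> {..<Suc K}" and t: "t \<in> {..<Suc K}" and eq: "inst s = inst t"
    show "s = t"
    proof (rule ccontr)
      assume ne: "s \<noteq> t"
      show False
      proof (cases "s = K \<or> t = K")
        case True
        then show False using instP[of s] instP[of t] s t eq ne unfolding inst_def by auto
      next
        case False
        then have sK: "s < K" and tK: "t < K" using s t by auto
        have es: "ends (inst s) = (w s, w (Suc s)) \<or> ends (inst s) = (w (Suc s), w s)"
          using instP[of s] s by auto
        have et: "ends (inst t) = (w t, w (Suc t)) \<or> ends (inst t) = (w (Suc t), w t)"
          using instP[of t] t by auto
        from es et eq show False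
          using wdist[of s t] wdist[of "Suc s" "Suc t"] wdist[of s "Suc t"] wdist[of "Suc s" t] sK tK ne
          by auto
      qed
    qed
  qed
  have "w (Suc K) = w 0" unfolding w_def vs_def by simp
  then show ?thesis using that[of "Suc K" w inst] instP inj by auto
qed


definition dvar :: "nat \<Rightarrow> nat list \<Rightarrow> nat list \<Rightarrow> nat" where
  "dvar n a b = (THE i. i < n \<and> a ! i \<noteq> b ! i)"

lemma swapD:
  assumes "(a,b) \<in> swap_instances n m"
  shows "a \<in> outcomes n m" "b \<in> outcomes n m" "dvar n a b < n" "a ! dvar n a b \<noteq> b ! dvar n a b"
    "\<And>j. j \<noteq> dvar n a b \<Longrightarrow> a ! j = b ! j"
proof -
  have c: "card {i. i < n \<and> a ! i \<noteq> b ! i} = 1" and ab: "a \<in> outcomes n m" "b \<in> outcomes n m"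
    using assms unfolding swap_instances_def by auto
  obtain i0 where i0: "{i. i < n \<and> a ! i \<noteq> b ! i} = {i0}" using c by (rule card_1_singletonE)
  then have "(THE i. i < n \<and> a ! i \<noteq> b ! i) = i0" by (intro the_equality) blast+
  then have dv: "dvar n a b = i0" unfolding dvar_def .
  show "a \<in> outcomes n m" "b \<in> outcomes n m" by (rule ab(1), rule ab(2))
  show "dvar n a b < n" "a ! dvar n a b \<noteq> b ! dvar n a b" using i0 dv by blast+
  fix j assume j: "j \<noteq> dvar n a b"
  show "a ! j = b ! j"
  proof (cases "j < n")
    case True then show ?thesis using i0 dv j by blast
  next
    case False then show ?thesis using ab nth_beyond[of a b j] unfolding outcomes_def by auto
  qed
qed

lemma swap_sym: "(a,b) \<in> swap_instances n m \<Longrightarrow> (b,a) \<in> swap_instances n m"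
proof -
  have "{i. i < n \<and> b ! i \<noteq> a ! i} = {i. i < n \<and> a ! i \<noteq> b ! i}" by auto
  then show "(a,b) \<in> swap_instances n m \<Longrightarrow> (b,a) \<in> swap_instances n m"
    unfolding swap_instances_def by simp
qed

lemma dvar_sym: "dvar n a b = dvar n b a"
proof -
  have "(\<lambda>i. i < n \<and> a ! i \<noteq> b ! i) = (\<lambda>i. i < n \<and> b ! i \<noteq> a ! i)" by auto
  then show ?thesis unfolding dvar_def by simp
qed

lemma dvar_eq: "(a,b) \<in> swap_instances n m \<Longrightarrow> i < n \<Longrightarrow> a ! i \<noteq> b ! i \<Longrightarrow> i = dvar n a b"
  using swapD(5) by blast

definition rk :: "nat \<Rightarrow> cpnet \<Rightarrow> nat \<Rightarrow> nat" where
  "rk n N j = card {l. (l, j) \<in> (parent_graph n N)\<^sup>+} * n + j"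

lemma pg_sub: "is_cpnet n m N \<Longrightarrow> parent_graph n N \<subseteq> {..<n} \<times> {..<n}"
  unfolding is_cpnet_def parent_graph_def by auto

lemma rk_lt:
  assumes N: "is_cpnet n m N" and ac: "acyclic_cpnet n N" and i: "i < n" and j: "j \<in> fst N i"
  shows "rk n N j < rk n N i"
proof -
  let ?P = "parent_graph n N"
  define A where "A x = {l. (l, x) \<in> ?P\<^sup>+}" for x
  have "?P\<^sup>+ \<subseteq> {..<n} \<times> {..<n}" using pg_sub[OF N] by (rule trancl_subset_Sigma)
  then have "A x \<subseteq> {..<n}" for x unfolding A_def by auto
  then have fin: "finite (A x)" for x by (rule finite_subset) simp
  have jP: "(j, i) \<in> ?P" using i j by (simp add: parent_graph_def)
  have sub: "A j \<subseteq> A i"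
  proof
    fix l assume "l \<in> A j"
    then have "(l,j) \<in> ?P\<^sup>+" by (simp add: A_def)
    then have "(l,i) \<in> ?P\<^sup>+" using jP by (rule trancl_into_trancl)
    then show "l \<in> A i" by (simp add: A_def)
  qed
  have "j \<in> A i" unfolding A_def using jP by auto
  moreover have "j \<notin> A j" using ac unfolding A_def acyclic_cpnet_def acyclic_def by auto
  ultimately have "A j \<subset> A i" using sub by blast
  then have lt: "card (A j) < card (A i)" using fin by (rule psubset_card_mono[rotated])
  have jn: "j < n" using N i j unfolding is_cpnet_def by auto
  have "(card (A j) + 1) * n \<le> card (A i) * n" using lt by (intro mult_le_mono1) simp
  then show ?thesis unfolding rk_def A_def[symmetric] using jn by (simp add: algebra_simps)
qed

lemma rk_inj: "j < n \<Longrightarrow> l < n \<Longrightarrow> rk n N j = rk n N l \<Longrightarrow> j = l"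
  unfolding rk_def by (metis mod_mult_self3 mod_less)

definition Qinv :: "nat \<Rightarrow> nat \<Rightarrow> cpnet \<Rightarrow> nat list \<Rightarrow> nat list \<Rightarrow> bool" where
  "Qinv n m N u u' \<longleftrightarrow> u \<in> outcomes n m \<and> u' \<in> outcomes n m \<and>
     (\<exists>j<n. u!j \<noteq> u'!j \<and> (\<forall>l<n. rk n N l < rk n N j \<longrightarrow> u!l = u'!l) \<and>
        (\<exists>r. snd N j u = Some r \<and> r (u'!j) (u!j)))"

lemma QinvI:
  "u \<in> outcomes n m \<Longrightarrow> u' \<in> outcomes n m \<Longrightarrow> j < n \<Longrightarrow> u!j \<noteq> u'!j \<Longrightarrow>
   (\<forall>l<n. rk n N l < rk n N j \<longrightarrow> u!l = u'!l) \<Longrightarrow> snd N j u = Some r \<Longrightarrow> r (u'!j) (u!j) \<Longrightarrow>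
   Qinv n m N u u'"
  unfolding Qinv_def by blast

lemma Qinv_flip:
  assumes N: "is_cpnet n m N" and f: "(u,u') \<in> improving_flip n m N"
  shows "Qinv n m N u u'"
proof -
  from f obtain i r where u: "u \<in> outcomes n m" "u' \<in> outcomes n m" and i: "i < n"
    and eq: "\<forall>j. j \<noteq> i \<longrightarrow> u!j = u'!j" and r: "snd N i u = Some r" "r (u'!i) (u!i)"
    unfolding improving_flip_def by blast
  have "strict_total_on m r" using N i u r unfolding is_cpnet_def by blast
  then have "u!i \<noteq> u'!i" using r unfolding strict_total_on_def by metis
  moreover have "\<forall>l<n. rk n N l < rk n N i \<longrightarrow> u!l = u'!l" using eq by auto
  ultimately show ?thesis using QinvI[OF u i] r by blast
qed

lemma Qinv_trans:
  assumes N: "is_cpnet n m N" and ac: "acyclic_cpnet n N"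
    and Q1: "Qinv n m N u u'" and Q2: "Qinv n m N u' u''"
  shows "Qinv n m N u u''"
proof -
  from Q1 obtain j1 r1 where o: "u \<in> outcomes n m" "u' \<in> outcomes n m" and j1: "j1 < n" "u!j1 \<noteq> u'!j1"
    and p1: "\<forall>l<n. rk n N l < rk n N j1 \<longrightarrow> u!l = u'!l"
    and r1: "snd N j1 u = Some r1" "r1 (u'!j1) (u!j1)" unfolding Qinv_def by blast
  from Q2 obtain j2 r2 where o2: "u'' \<in> outcomes n m" and j2: "j2 < n" "u'!j2 \<noteq> u''!j2"
    and p2: "\<forall>l<n. rk n N l < rk n N j2 \<longrightarrow> u'!l = u''!l"
    and r2: "snd N j2 u' = Some r2" "r2 (u''!j2) (u'!j2)" unfolding Qinv_def by blast
  have dep: "\<And>i v v'. i < n \<Longrightarrow> v \<in> outcomes n m \<Longrightarrow> v' \<in> outcomes n m \<Longrightarrow>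
      (\<forall>l\<in>fst N i. v!l = v'!l) \<Longrightarrow> snd N i v = snd N i v'"
    using N unfolding is_cpnet_def by blast
  have par: "\<And>i l. i < n \<Longrightarrow> l \<in> fst N i \<Longrightarrow> l < n \<and> rk n N l < rk n N i"
    using N rk_lt[OF N ac] unfolding is_cpnet_def by blast
  consider "rk n N j1 < rk n N j2" | "rk n N j2 < rk n N j1" | "j1 = j2"
    using rk_inj[OF j1(1) j2(1)] by (metis linorder_neqE_nat)
  then show ?thesis
  proof cases
    case 1
    have ne: "u!j1 \<noteq> u''!j1" using p2 j1 1 by auto
    have pre: "\<forall>l<n. rk n N l < rk n N j1 \<longrightarrow> u!l = u''!l"
      using p1 p2 1 by (metis order.strict_trans)
    have rr: "r1 (u''!j1) (u!j1)" using p2 j1 1 r1 by auto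
    from QinvI[OF o(1) o2 j1(1) ne pre r1(1) rr] show ?thesis .
  next
    case 2
    have e: "u!j2 = u'!j2" using p1 j2 2 by auto
    have "snd N j2 u = snd N j2 u'"
      using dep[OF j2(1) o] par[OF j2(1)] p1 2 by (meson order.strict_trans)
    then have s2: "snd N j2 u = Some r2" using r2 by simp
    have ne: "u!j2 \<noteq> u''!j2" using e j2 by simp
    have pre: "\<forall>l<n. rk n N l < rk n N j2 \<longrightarrow> u!l = u''!l"
      using p1 p2 2 by (metis order.strict_trans)
    have rr: "r2 (u''!j2) (u!j2)" using r2 e by simp
    from QinvI[OF o(1) o2 j2(1) ne pre s2 rr] show ?thesis .
  next
    case 3
    have "snd N j1 u = snd N j1 u'"
      using dep[OF j1(1) o] par[OF j1(1)] p1 by blast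
    then have rr: "r1 = r2" using r1 r2 3 by simp
    have st: "strict_total_on m r1" using N j1 o r1 unfolding is_cpnet_def by blast
    then have tr: "r1 (u''!j1) (u!j1)" using r1 r2 rr 3 unfolding strict_total_on_def by metis
    then have ne: "u!j1 \<noteq> u''!j1" using st unfolding strict_total_on_def by metis
    have pre: "\<forall>l<n. rk n N l < rk n N j1 \<longrightarrow> u!l = u''!l"
      using p1 p2 3 by auto
    from QinvI[OF o(1) o2 j1(1) ne pre r1(1) tr] show ?thesis .
  qed
qed

lemma Qinv_trancl:
  assumes N: "is_cpnet n m N" and ac: "acyclic_cpnet n N"
    and "(u,u') \<in> (improving_flip n m N)\<^sup>+"
  shows "Qinv n m N u u'"
  using assms(3)
proof (induction rule: trancl_induct)
  case (base y) then show ?case using Qinv_flip[OF N] by blast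
next
  case (step y z) then show ?case using Qinv_flip[OF N] Qinv_trans[OF N ac] by blast
qed

lemma concept_iff:
  assumes N: "is_cpnet n m N" and ac: "acyclic_cpnet n N" and x: "(a,b) \<in> swap_instances n m"
  shows "(a,b) \<in> concept n m N \<longleftrightarrow>
    (\<exists>r. snd N (dvar n a b) b = Some r \<and> r (a ! dvar n a b) (b ! dvar n a b))"
proof
  assume "(a,b) \<in> concept n m N"
  then have "(b,a) \<in> (improving_flip n m N)\<^sup>+" unfolding concept_def preferred_def by auto
  then have "Qinv n m N b a" by (rule Qinv_trancl[OF N ac])
  then obtain j r where j: "j < n" "b!j \<noteq> a!j" "snd N j b = Some r" "r (a!j) (b!j)"
    unfolding Qinv_def by blast
  then have "j = dvar n a b" using dvar_eq[OF x] by metis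
  then show "\<exists>r. snd N (dvar n a b) b = Some r \<and> r (a ! dvar n a b) (b ! dvar n a b)" using j by blast
next
  assume "\<exists>r. snd N (dvar n a b) b = Some r \<and> r (a ! dvar n a b) (b ! dvar n a b)"
  then have "(b,a) \<in> improving_flip n m N"
  proof -
    have "\<forall>j. j \<noteq> dvar n a b \<longrightarrow> b!j = a!j" using swapD(5)[OF x] by metis
    then show ?thesis unfolding improving_flip_def using swapD(1-3)[OF x] \<open>\<exists>r. _\<close> by blast
  qed
  then show "(a,b) \<in> concept n m N" unfolding concept_def preferred_def using x by auto
qed


lemma labeling_contra:
  fixes g :: "nat \<Rightarrow> nat" and isI fw mem :: "nat \<Rightarrow> bool" and cc :: "(nat \<Rightarrow> nat \<Rightarrow> bool) option"
  assumes closed: "g L = g 0"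
    and nrel: "\<And>t. t < L \<Longrightarrow> \<not> isI t \<Longrightarrow> g (Suc t) = g t"
    and rel: "\<And>t. t < L \<Longrightarrow> isI t \<Longrightarrow> g t \<noteq> g (Suc t) \<and> g t < m \<and> g (Suc t) < m"
    and memI: "\<And>t. t < L \<Longrightarrow> isI t \<Longrightarrow> mem t \<longleftrightarrow>
        (\<exists>r. cc = Some r \<and> (if fw t then r (g (Suc t)) (g t) else r (g t) (g (Suc t))))"
    and lab: "\<And>t. t < L \<Longrightarrow> isI t \<Longrightarrow> mem t \<longleftrightarrow> (fw t \<longleftrightarrow> (\<exists>s<L. isI s \<and> fw s))"
    and tz: "tz < L" "isI tz"
    and st: "\<And>r. cc = Some r \<Longrightarrow> strict_total_on m r"
  shows False
proof (cases "\<exists>s<L. isI s \<and> fw s")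
  case True
  then obtain s where s: "s < L" "isI s" "fw s" by blast
  then have "mem s" using lab True by blast
  then obtain r where r: "cc = Some r" "r (g (Suc s)) (g s)" using memI[OF s(1,2)] s(3) by auto
  have str: "strict_total_on m r" using st r(1) .
  show False
  proof (rule chain_contra[where R=r and g=g and L=L and tz=s])
    show "\<And>a b c. r a b \<Longrightarrow> r b c \<Longrightarrow> r a c" "\<And>a. \<not> r a a"
      using str unfolding strict_total_on_def by blast+
    show "g L = g 0" by (rule closed)
    show "s < L" "r (g (Suc s)) (g s)" using s r by auto
    fix t assume t: "t < L"
    show "g (Suc t) = g t \<or> r (g (Suc t)) (g t)"
    proof (cases "isI t")
      case False then show ?thesis using nrel t by simp
    next
      case I: True
      show ?thesis
      proof (cases "fw t")
        case True
        then have "mem t" using lab[OF t I] \<open>\<exists>s<L. isI s \<and> fw s\<close> by blast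
        then show ?thesis using memI[OF t I] True r(1) by auto
      next
        case False
        then have "\<not> mem t" using lab[OF t I] \<open>\<exists>s<L. isI s \<and> fw s\<close> by blast
        then have "\<not> r (g t) (g (Suc t))" using memI[OF t I] False r(1) by auto
        then show ?thesis using rel[OF t I] str unfolding strict_total_on_def by blast
      qed
    qed
  qed
next
  case False
  have m0: "mem tz" using lab[OF tz] False tz by blast
  then obtain r where r: "cc = Some r" using memI[OF tz] by auto
  have str: "strict_total_on m r" using st r(1) .
  have rs: "r (g t) (g (Suc t))" if "t < L" "isI t" for t
  proof -
    have "\<not> fw t" using False that by blast
    then have "mem t" using lab[OF that] False by blast
    then show ?thesis using memI[OF that] \<open>\<not> fw t\<close> r by auto
  qed
  show False
  proof (rule chain_contra[where R="\<lambda>x y. r y x" and g=g and L=L and tz=tz])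
    show "\<And>a b c. r b a \<Longrightarrow> r c b \<Longrightarrow> r c a" "\<And>a. \<not> r a a"
      using str unfolding strict_total_on_def by blast+
    show "g L = g 0" by (rule closed)
    show "tz < L" "r (g tz) (g (Suc tz))" using tz rs by auto
    fix t assume t: "t < L"
    show "g (Suc t) = g t \<or> r (g t) (g (Suc t))"
      using nrel[OF t] rs[OF t] by blast
  qed
qed

lemma outcomes_eq: "outcomes n m = {xs. set xs \<subseteq> {..<m} \<and> length xs = n}"
  unfolding outcomes_def by auto

lemma finite_outcomes: "finite (outcomes n m)"
  unfolding outcomes_eq by (rule finite_lists_length_eq) simp

lemma card_outcomes: "card (outcomes n m) = m ^ n"
  unfolding outcomes_eq by (simp add: card_lists_length_eq)

lemma outcomes_ne: "0 < m \<Longrightarrow> replicate n 0 \<in> outcomes n m"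
  unfolding outcomes_def by auto

lemma finite_swap: "finite (swap_instances n m)"
proof -
  have "swap_instances n m \<subseteq> outcomes n m \<times> outcomes n m" unfolding swap_instances_def by auto
  then show ?thesis using finite_outcomes by (meson finite_SigmaI finite_subset)
qed

lemma outcome_nth: "u \<in> outcomes n m \<Longrightarrow> i < n \<Longrightarrow> u ! i < m"
  unfolding outcomes_def by auto

lemma wf_pg:
  assumes "is_cpnet n m N" "acyclic_cpnet n N"
  shows "wf (parent_graph n N)"
proof -
  have "finite (parent_graph n N)" using pg_sub[OF assms(1)] by (rule finite_subset) simp
  then show ?thesis using assms(2) unfolding acyclic_cpnet_def by (rule finite_acyclic_wf)
qed


lemma ub_general:
  assumes Ssub: "S \<subseteq> swap_instances n m" and sh: "shatters (acyclic_k_class n m k) S" and m: "0 < m"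
  shows "card S \<le> m ^ n - 1"
proof -
  have fin: "finite S" using Ssub finite_swap finite_subset by blast
  have "forest id S"
  proof (rule ccontr)
    assume "\<not> forest id S"
    then obtain L w inst where L: "0 < L" "w L = w 0"
      and I: "\<And>t. t<L \<Longrightarrow> inst t \<in> S \<and> (id (inst t) = (w t, w (Suc t)) \<or> id (inst t) = (w (Suc t), w t))"
      and inj: "inj_on inst {..<L}" by (rule cycle_of_not_forest[of id S]) blast+
    define vt where "vt t = dvar n (fst (inst t)) (snd (inst t))" for t
    define fw where "fw t \<longleftrightarrow> inst t = (w (Suc t), w t)" for t
    define T where "T = {inst t | t. t < L \<and> (fw t \<longleftrightarrow> (\<exists>s<L. vt s = vt t \<and> fw s))}"
    have "T \<subseteq> S" using I by (auto simp: T_def)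
    then obtain c where "c \<in> acyclic_k_class n m k" "c \<inter> S = T" using sh unfolding shatters_def by blast
    then obtain N where N: "is_cpnet n m N" "acyclic_cpnet n N" and cT: "concept n m N \<inter> S = T"
      unfolding acyclic_k_class_def by blast
    have sw: "(w t, w (Suc t)) \<in> swap_instances n m" if "t < L" for t
      using I[OF that] Ssub swap_sym by (metis id_apply subsetD)
    have vt: "vt t = dvar n (w t) (w (Suc t))" if "t < L" for t
      using I[OF that] dvar_sym unfolding vt_def by (metis fst_conv id_apply snd_conv)
    have wout: "w t \<in> outcomes n m" if "t \<le> L" for t
    proof (cases "t < L")
      case True then show ?thesis using swapD(1)[OF sw] by blast
    next
      case False then have "t = L" using that by simp
      then show ?thesis using L swapD(1)[OF sw[of 0]] by simp
    qed
    have memT: "inst t \<in> concept n m N \<longleftrightarrow> (fw t \<longleftrightarrow> (\<exists>s<L. vt s = vt t \<and> fw s))" if t: "t < L" for t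
    proof -
      have "inst t \<in> concept n m N \<longleftrightarrow> inst t \<in> T" using cT I[OF t] by blast
      also have "\<dots> \<longleftrightarrow> (fw t \<longleftrightarrow> (\<exists>s<L. vt s = vt t \<and> fw s))"
      proof
        assume "inst t \<in> T"
        then obtain s where s: "s < L" "inst t = inst s" "fw s \<longleftrightarrow> (\<exists>s'<L. vt s' = vt s \<and> fw s')"
          unfolding T_def by blast
        have "s = t" using inj s(1,2) t by (metis inj_onD lessThan_iff)
        then show "fw t \<longleftrightarrow> (\<exists>s<L. vt s = vt t \<and> fw s)" using s by simp
      next
        assume "fw t \<longleftrightarrow> (\<exists>s<L. vt s = vt t \<and> fw s)"
        then show "inst t \<in> T" unfolding T_def using t by blast
      qed
      finally show ?thesis .
    qed
    define C where "C = vt ` {..<L}"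
    have Cn: "C \<subseteq> {..<n}" unfolding C_def using vt swapD(3)[OF sw] by auto
    have agree: "t \<le> L \<Longrightarrow> \<forall>l<n. l \<notin> C \<longrightarrow> w t ! l = w 0 ! l" for t
    proof (induction t)
      case 0 then show ?case by simp
    next
      case (Suc t)
      then have t: "t < L" by simp
      have "vt t \<in> C" unfolding C_def using t by simp
      then have "\<forall>l<n. l \<notin> C \<longrightarrow> w (Suc t) ! l = w t ! l"
        using swapD(5)[OF sw[OF t]] vt[OF t] by metis
      then show ?case using Suc by simp
    qed
    have dep: "\<And>i v v'. i < n \<Longrightarrow> v \<in> outcomes n m \<Longrightarrow> v' \<in> outcomes n m \<Longrightarrow>
      (\<forall>l\<in>fst N i. v!l = v'!l) \<Longrightarrow> snd N i v = snd N i v'"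
      using N(1) unfolding is_cpnet_def by blast
    have par: "\<exists>j\<in>fst N i. j \<in> C" if iC: "i \<in> C" for i
    proof (rule ccontr)
      assume no: "\<not> (\<exists>j\<in>fst N i. j \<in> C)"
      have i_n: "i < n" using iC Cn by auto
      have pn: "fst N i \<subseteq> {..<n}" using N(1) i_n unfolding is_cpnet_def by blast
      have cc: "snd N i (w t) = snd N i (w 0)" if "t \<le> L" for t
      proof (rule dep[OF i_n wout[OF that] wout])
        show "\<forall>l\<in>fst N i. w t ! l = w 0 ! l" using agree[OF that] no pn by blast
      qed simp
      obtain tz where tz: "tz < L" "vt tz = i" using iC unfolding C_def by blast
      show False
      proof (rule labeling_contra[where g="\<lambda>t. w t ! i" and isI="\<lambda>t. vt t = i" and fw=fw
            and mem="\<lambda>t. inst t \<in> concept n m N" and cc="snd N i (w 0)" and L=L and m=m and tz=tz])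
        show "w L ! i = w 0 ! i" using L by simp
        show "tz < L" "vt tz = i" by (rule tz(1), rule tz(2))
        fix t assume t: "t < L"
        show "vt t \<noteq> i \<Longrightarrow> w (Suc t) ! i = w t ! i"
          using swapD(5)[OF sw[OF t]] vt[OF t] by metis
        show "vt t = i \<Longrightarrow> w t ! i \<noteq> w (Suc t) ! i \<and> w t ! i < m \<and> w (Suc t) ! i < m"
          using swapD(4)[OF sw[OF t]] vt[OF t] outcome_nth[OF wout, of t i] outcome_nth[OF wout, of "Suc t" i] t i_n
          by auto
        show "vt t = i \<Longrightarrow> inst t \<in> concept n m N \<longleftrightarrow> (fw t \<longleftrightarrow> (\<exists>s<L. vt s = i \<and> fw s))"
          using memT[OF t] by simp
        assume vi: "vt t = i"
        have ins: "inst t \<in> swap_instances n m" using I[OF t] Ssub by blast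
        show "inst t \<in> concept n m N \<longleftrightarrow> (\<exists>r. snd N i (w 0) = Some r \<and>
            (if fw t then r (w (Suc t) ! i) (w t ! i) else r (w t ! i) (w (Suc t) ! i)))"
        proof (cases "fw t")
          case True
          then have it: "inst t = (w (Suc t), w t)" unfolding fw_def .
          have "dvar n (w (Suc t)) (w t) = i" using vi vt[OF t] dvar_sym by metis
          then show ?thesis using concept_iff[OF N(1) N(2), of "w (Suc t)" "w t"] ins it True cc[of t] t
            by simp
        next
          case False
          then have it: "inst t = (w t, w (Suc t))" using I[OF t] unfolding fw_def by auto
          have "dvar n (w t) (w (Suc t)) = i" using vi vt[OF t] by metis
          then show ?thesis using concept_iff[OF N(1) N(2), of "w t" "w (Suc t)"] ins it False cc[of "Suc t"] t
            by simp
        qed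
      next
        fix r assume "snd N i (w 0) = Some r"
        then show "strict_total_on m r" using N(1) i_n wout[of 0] unfolding is_cpnet_def by blast
      qed
    qed
    have "vt 0 \<in> C" unfolding C_def using L by simp
    then obtain i where iC: "i \<in> C" and mn: "\<And>y. (y, i) \<in> parent_graph n N \<Longrightarrow> y \<notin> C"
      using wf_pg[OF N] by (metis wfE_min)
    obtain j where "j \<in> fst N i" "j \<in> C" using par[OF iC] by blast
    moreover have "i < n" using iC Cn by auto
    ultimately show False using mn unfolding parent_graph_def by blast
  qed
  then have "card S \<le> card (outcomes n m) - 1"
    using forest_card[of "outcomes n m" S id] finite_outcomes outcomes_ne[OF m] fin Ssub
    unfolding swap_instances_def by fastforce
  then show ?thesis using card_outcomes by simp
qed


lemma ub_sep_var:
  assumes Ssub: "S \<subseteq> swap_instances n m" and sh: "shatters (acyclic_k_class n m 0) S"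
  shows "card {s\<in>S. dvar n (fst s) (snd s) = i} \<le> m - 1"
proof -
  define Si where "Si = {s\<in>S. dvar n (fst s) (snd s) = i}"
  define ends where "ends s = (fst s ! i, snd s ! i)" for s :: "nat list \<times> nat list"
  have fin: "finite Si" using Ssub finite_swap finite_subset unfolding Si_def by (metis (no_types, lifting) mem_Collect_eq subsetI)
  have "forest ends Si"
  proof (rule ccontr)
    assume "\<not> forest ends Si"
    then obtain L w inst where L: "0 < L" "w L = w 0"
      and I: "\<And>t. t<L \<Longrightarrow> inst t \<in> Si \<and> (ends (inst t) = (w t, w (Suc t)) \<or> ends (inst t) = (w (Suc t), w t))"
      and inj: "inj_on inst {..<L}" by (rule cycle_of_not_forest[of ends Si]) blast+
    have ins: "inst t \<in> swap_instances n m" "dvar n (fst (inst t)) (snd (inst t)) = i" if "t < L" for t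
      using I[OF that] Ssub unfolding Si_def by auto
    have i_n: "i < n" using swapD(3)[of "fst (inst 0)" "snd (inst 0)" n m] ins[OF L(1)] by simp
    define fw where "fw t \<longleftrightarrow> ends (inst t) = (w (Suc t), w t)" for t
    define T where "T = {inst t | t. t < L \<and> (fw t \<longleftrightarrow> (\<exists>s<L. True \<and> fw s))}"
    have "T \<subseteq> S" using I by (auto simp: T_def Si_def)
    then obtain c where "c \<in> acyclic_k_class n m 0" "c \<inter> S = T" using sh unfolding shatters_def by blast
    then obtain N where N: "is_cpnet n m N" "acyclic_cpnet n N" "k_bounded n 0 N" and cT: "concept n m N \<inter> S = T"
      unfolding acyclic_k_class_def by blast
    have pn: "fst N i \<subseteq> {..<n}" using N(1) i_n unfolding is_cpnet_def by blast
    then have "finite (fst N i)" by (rule finite_subset) simp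
    then have pe: "fst N i = {}" using N(3) i_n unfolding k_bounded_def by auto
    define u0 where "u0 = fst (inst 0)"
    have u0: "u0 \<in> outcomes n m" using swapD(1) ins[OF L(1)] unfolding u0_def by (metis prod.collapse)
    have cc: "snd N i v = snd N i u0" if "v \<in> outcomes n m" for v
      using N(1) i_n that u0 pe unfolding is_cpnet_def by blast
    have memT: "inst t \<in> concept n m N \<longleftrightarrow> (fw t \<longleftrightarrow> (\<exists>s<L. True \<and> fw s))" if t: "t < L" for t
    proof -
      have "inst t \<in> S" using I[OF t] unfolding Si_def by blast
      then have "inst t \<in> concept n m N \<longleftrightarrow> inst t \<in> T" using cT by blast
      also have "\<dots> \<longleftrightarrow> (fw t \<longleftrightarrow> (\<exists>s<L. True \<and> fw s))"
      proof
        assume "inst t \<in> T"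
        then obtain s where s: "s < L" "inst t = inst s" "fw s \<longleftrightarrow> (\<exists>s'<L. True \<and> fw s')"
          unfolding T_def by blast
        have "s = t" using inj s(1,2) t by (metis inj_onD lessThan_iff)
        then show "fw t \<longleftrightarrow> (\<exists>s<L. True \<and> fw s)" using s by simp
      next
        assume "fw t \<longleftrightarrow> (\<exists>s<L. True \<and> fw s)"
        then show "inst t \<in> T" unfolding T_def using t by blast
      qed
      finally show ?thesis .
    qed
    show False
    proof (rule labeling_contra[where g=w and isI="\<lambda>t. True" and fw=fw
          and mem="\<lambda>t. inst t \<in> concept n m N" and cc="snd N i u0" and L=L and m=m and tz=0])
      show "w L = w 0" by (rule L(2))
      show "0 < L" "True" using L by auto
      fix t assume t: "t < L"
      obtain a b where ab: "inst t = (a,b)" by (cases "inst t")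
      have abs: "(a,b) \<in> swap_instances n m" "dvar n a b = i" using ins[OF t] ab by auto
      have ne: "a ! i \<noteq> b ! i" using swapD(4)[OF abs(1)] abs(2) by simp
      have lt: "a ! i < m" "b ! i < m" using outcome_nth swapD(1,2)[OF abs(1)] i_n by blast+
      have e: "(a ! i, b ! i) = (w t, w (Suc t)) \<or> (a ! i, b ! i) = (w (Suc t), w t)"
        using I[OF t] ab unfolding ends_def by simp
      show "\<not> True \<Longrightarrow> w (Suc t) = w t" by simp
      show "True \<Longrightarrow> w t \<noteq> w (Suc t) \<and> w t < m \<and> w (Suc t) < m" using e ne lt by auto
      show "True \<Longrightarrow> inst t \<in> concept n m N \<longleftrightarrow> (fw t \<longleftrightarrow> (\<exists>s<L. True \<and> fw s))"
        using memT[OF t] by simp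
      have cb: "snd N i b = snd N i u0" using cc swapD(2)[OF abs(1)] by blast
      show "True \<Longrightarrow> inst t \<in> concept n m N \<longleftrightarrow> (\<exists>r. snd N i u0 = Some r \<and>
            (if fw t then r (w (Suc t)) (w t) else r (w t) (w (Suc t))))"
      proof (cases "fw t")
        case True
        then have "(a ! i, b ! i) = (w (Suc t), w t)" using ab unfolding fw_def ends_def by simp
        then show ?thesis using concept_iff[OF N(1) N(2) abs(1)] abs(2) ab cb True by simp
      next
        case False
        then have "(a ! i, b ! i) = (w t, w (Suc t))" using e ab unfolding fw_def ends_def by auto
        then show ?thesis using concept_iff[OF N(1) N(2) abs(1)] abs(2) ab cb False by simp
      qed
    next
      fix r assume "snd N i u0 = Some r"
      then show "strict_total_on m r" using N(1) i_n u0 unfolding is_cpnet_def by blast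
    qed
  qed
  moreover have "\<forall>e\<in>Si. fst (ends e) \<in> {..<m} \<and> snd (ends e) \<in> {..<m}"
  proof
    fix e assume e: "e \<in> Si"
    obtain a b where ab: "e = (a,b)" by (cases e)
    have sw: "(a,b) \<in> swap_instances n m" and dv: "dvar n a b = i" using e ab Ssub unfolding Si_def by auto
    have "i < n" using swapD(3)[OF sw] dv by simp
    then have "a ! i < m" "b ! i < m" using outcome_nth swapD(1,2)[OF sw] by blast+
    then show "fst (ends e) \<in> {..<m} \<and> snd (ends e) \<in> {..<m}"
      using ab unfolding ends_def by simp
  qed
  ultimately have "card Si \<le> m - 1"
  proof (cases "Si = {}")
    case False
    then obtain e where "e \<in> Si" by blast
    then have "{..<m} \<noteq> {}" using \<open>\<forall>e\<in>Si. _\<close> by blast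
    then show ?thesis using forest_card[of "{..<m}" Si ends] fin \<open>forest ends Si\<close> \<open>\<forall>e\<in>Si. _\<close> by simp
  qed simp
  then show ?thesis unfolding Si_def .
qed

lemma ub_sep:
  assumes Ssub: "S \<subseteq> swap_instances n m" and sh: "shatters (acyclic_k_class n m 0) S"
  shows "card S \<le> (m - 1) * n"
proof -
  have eq: "S = (\<Union>i\<in>{..<n}. {s\<in>S. dvar n (fst s) (snd s) = i})"
  proof
    show "S \<subseteq> (\<Union>i\<in>{..<n}. {s\<in>S. dvar n (fst s) (snd s) = i})"
    proof
      fix s assume "s \<in> S"
      moreover have "dvar n (fst s) (snd s) < n" using \<open>s \<in> S\<close> Ssub swapD(3)[of "fst s" "snd s"] by auto
      ultimately show "s \<in> (\<Union>i\<in>{..<n}. {s\<in>S. dvar n (fst s) (snd s) = i})" by auto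
    qed
  qed auto
  have c1: "card S = card (\<Union>i\<in>{..<n}. {s\<in>S. dvar n (fst s) (snd s) = i})"
    using eq by (rule arg_cong)
  have "card (\<Union>i\<in>{..<n}. {s\<in>S. dvar n (fst s) (snd s) = i})
     \<le> (\<Sum>i\<in>{..<n}. card {s\<in>S. dvar n (fst s) (snd s) = i})"
    by (rule card_UN_le) simp
  then have "card S \<le> (\<Sum>i\<in>{..<n}. card {s\<in>S. dvar n (fst s) (snd s) = i})"
    using c1 by linarith
  also have "\<dots> \<le> (\<Sum>i\<in>{..<n}. m - 1)" using ub_sep_var[OF Ssub sh] by (intro sum_mono) auto
  finally show ?thesis by (simp add: mult.commute)
qed


lemma mk_cpnet:
  fixes c :: "nat \<Rightarrow> nat list \<Rightarrow> (nat \<Rightarrow> nat \<Rightarrow> bool) option"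
  assumes P: "\<And>i. i < n \<Longrightarrow> P i \<subseteq> {..<i}"
    and st: "\<And>i u r. i < n \<Longrightarrow> u \<in> outcomes n m \<Longrightarrow> c i u = Some r \<Longrightarrow> strict_total_on m r"
    and dep: "\<And>i u u'. i < n \<Longrightarrow> u \<in> outcomes n m \<Longrightarrow> u' \<in> outcomes n m \<Longrightarrow>
        (\<forall>j\<in>P i. u!j = u'!j) \<Longrightarrow> c i u = c i u'"
  shows "\<exists>N. snd N = c \<and> is_cpnet n m N \<and> acyclic_cpnet n N \<and> (\<forall>i<n. fst N i \<subseteq> P i)"
proof -
  define E where "E i = {j\<in>P i. \<exists>u\<in>outcomes n m. \<exists>u'\<in>outcomes n m.
      (\<forall>l\<in>P i - {j}. u!l = u'!l) \<and> c i u \<noteq> c i u'}" for i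
  have EP: "E i \<subseteq> P i" for i unfolding E_def by auto
  have depE: "c i u = c i u'" if i: "i < n" and u: "u \<in> outcomes n m" and u': "u' \<in> outcomes n m"
    and ag: "\<forall>j\<in>E i. u!j = u'!j" for i u u'
  proof -
    have finP: "finite (P i)" using P[OF i] finite_subset by blast
    have "\<forall>u. u \<in> outcomes n m \<longrightarrow> (\<forall>j\<in>E i. u!j = u'!j) \<longrightarrow> card {j\<in>P i. u!j \<noteq> u'!j} = d
        \<longrightarrow> c i u = c i u'" for d
    proof (induction d rule: less_induct)
      case (less d)
      show ?case
      proof (intro allI impI)
        fix v assume v: "v \<in> outcomes n m" and agv: "\<forall>j\<in>E i. v!j = u'!j"
          and cd: "card {j\<in>P i. v!j \<noteq> u'!j} = d"
        show "c i v = c i u'"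
        proof (cases "{j\<in>P i. v!j \<noteq> u'!j} = {}")
          case True
          then show ?thesis using dep[OF i v u'] by blast
        next
          case False
          then obtain j where j: "j \<in> P i" "v!j \<noteq> u'!j" by blast
          have jE: "j \<notin> E i" using j agv by blast
          have jn: "j < n" using P[OF i] j(1) i by auto
          define v2 where "v2 = v[j := u'!j]"
          have v2o: "v2 \<in> outcomes n m" using v u' jn unfolding v2_def outcomes_def
            by (auto dest!: subsetD[OF set_update_subset_insert])
          have "\<not> ((\<forall>l\<in>P i - {j}. v!l = v2!l) \<and> c i v \<noteq> c i v2)"
            using jE j(1) v v2o unfolding E_def by blast
          moreover have "\<forall>l\<in>P i - {j}. v!l = v2!l" unfolding v2_def by simp
          ultimately have e1: "c i v = c i v2" by blast
          have agv2: "\<forall>l\<in>E i. v2!l = u'!l" using agv jE unfolding v2_def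
            by (metis nth_list_update_neq)
          have lenv: "length v = n" using v unfolding outcomes_def by simp
          have "{l\<in>P i. v2!l \<noteq> u'!l} = {l\<in>P i. v!l \<noteq> u'!l} - {j}"
            unfolding v2_def using jn lenv by (auto simp: nth_list_update)
          moreover have "card ({l\<in>P i. v!l \<noteq> u'!l} - {j}) < card {l\<in>P i. v!l \<noteq> u'!l}"
            using j finP by (intro card_Diff1_less) auto
          ultimately have "card {l\<in>P i. v2!l \<noteq> u'!l} < d"
            using cd by simp
          then have "c i v2 = c i u'" using less.IH v2o agv2 by blast
          then show ?thesis using e1 by simp
        qed
      qed
    qed
    then show ?thesis using u ag by blast
  qed
  define N where "N = (E, c)"
  have cp: "is_cpnet n m N"
    unfolding is_cpnet_def N_def fst_conv snd_conv
  proof (intro conjI allI impI ballI)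
    fix i assume "i < n"
    then show "E i \<subseteq> {..<n} - {i}" using EP P by fastforce
  next
    fix i u r assume "i < n" "u \<in> outcomes n m" "c i u = Some r"
    then show "strict_total_on m r" by (rule st)
  next
    fix i u u' assume "i < n" "u \<in> outcomes n m" "u' \<in> outcomes n m" "\<forall>j\<in>E i. u ! j = u' ! j"
    then show "c i u = c i u'" by (rule depE)
  next
    fix i j assume "i < n" "j \<in> E i"
    then show "\<exists>u\<in>outcomes n m. \<exists>u'\<in>outcomes n m. (\<forall>l\<in>E i - {j}. u ! l = u' ! l) \<and> c i u \<noteq> c i u'"
      unfolding E_def by blast
  qed
  have "parent_graph n N \<subseteq> less_than"
    unfolding parent_graph_def N_def using EP P by fastforce
  then have ac: "acyclic_cpnet n N" unfolding acyclic_cpnet_def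
    using acyclic_subset wf_acyclic wf_less_than by blast
  show ?thesis using cp ac EP unfolding N_def by auto
qed


definition Zs :: "nat \<Rightarrow> nat \<Rightarrow> nat \<Rightarrow> nat list set" where
  "Zs n m p = {u \<in> outcomes n m. \<forall>j<n. p \<le> j \<longrightarrow> u!j = 0}"

definition Ski :: "nat \<Rightarrow> nat \<Rightarrow> nat \<Rightarrow> nat \<Rightarrow> (nat list \<times> nat list) set" where
  "Ski n m k i = (\<lambda>(a,u). (u[i:=a], u)) ` ({1..<m} \<times> Zs n m (min i k))"

definition Sk :: "nat \<Rightarrow> nat \<Rightarrow> nat \<Rightarrow> (nat list \<times> nat list) set" where
  "Sk n m k = (\<Union>i\<in>{..<n}. Ski n m k i)"

lemma card_Zs:
  assumes "p \<le> n" "0 < m"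
  shows "card (Zs n m p) = m ^ p"
proof -
  let ?L = "{xs. set xs \<subseteq> {..<m} \<and> length xs = p}"
  let ?f = "\<lambda>xs. xs @ replicate (n - p) (0::nat)"
  have "Zs n m p = ?f ` ?L"
  proof
    show "?f ` ?L \<subseteq> Zs n m p"
    proof
      fix u assume "u \<in> ?f ` ?L"
      then obtain xs where xs: "set xs \<subseteq> {..<m}" "length xs = p" "u = ?f xs" by blast
      have "u \<in> outcomes n m" using xs assms unfolding outcomes_def by auto
      moreover have "\<forall>j<n. p \<le> j \<longrightarrow> u!j = 0" using xs by (auto simp: nth_append)
      ultimately show "u \<in> Zs n m p" unfolding Zs_def by blast
    qed
  next
    show "Zs n m p \<subseteq> ?f ` ?L"
    proof
      fix u assume u: "u \<in> Zs n m p"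
      then have len: "length u = n" and sm: "set u \<subseteq> {..<m}" and z: "\<forall>j<n. p \<le> j \<longrightarrow> u!j = 0"
        unfolding Zs_def outcomes_def by auto
      have "u = ?f (take p u)"
        by (rule nth_equalityI) (use len assms z in \<open>auto simp: nth_append min_def\<close>)
      moreover have "take p u \<in> ?L" using sm len assms set_take_subset[of p u] by auto
      ultimately show "u \<in> ?f ` ?L" by blast
    qed
  qed
  moreover have "inj_on ?f ?L" by (auto intro!: inj_onI)
  ultimately have "card (Zs n m p) = card ?L" by (simp add: card_image)
  then show ?thesis by (simp add: card_lists_length_eq)
qed

lemma Zs_i0: "u \<in> Zs n m (min i k) \<Longrightarrow> i < n \<Longrightarrow> u ! i = 0"
  unfolding Zs_def by auto

lemma Ski_mem:
  "s \<in> Ski n m k i \<longleftrightarrow> (\<exists>a u. s = (u[i:=a], u) \<and> 0 < a \<and> a < m \<and> u \<in> Zs n m (min i k))"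
  unfolding Ski_def by (auto simp: Suc_le_eq)

lemma Ski_swap:
  assumes i: "i < n" and a: "0 < a" "a < m" and u: "u \<in> Zs n m (min i k)"
  shows "(u[i:=a], u) \<in> swap_instances n m" "dvar n (u[i:=a]) u = i"
proof -
  have uo: "u \<in> outcomes n m" using u unfolding Zs_def by blast
  have ui: "u ! i = 0" using Zs_i0[OF u i] .
  have len: "length u = n" using uo unfolding outcomes_def by simp
  have o2: "u[i:=a] \<in> outcomes n m" using uo a unfolding outcomes_def
    by (auto dest!: subsetD[OF set_update_subset_insert])
  have "{j. j < n \<and> u[i:=a] ! j \<noteq> u ! j} = {i}" using i len ui a by (auto simp: nth_list_update)
  then show sw: "(u[i:=a], u) \<in> swap_instances n m" unfolding swap_instances_def using uo o2 by simp
  show "dvar n (u[i:=a]) u = i" using dvar_eq[OF sw i] i len ui a by simp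
qed

lemma Ski_sub: "i < n \<Longrightarrow> Ski n m k i \<subseteq> swap_instances n m"
proof
  fix s assume i: "i < n" and "s \<in> Ski n m k i"
  then obtain a u where "s = (u[i:=a], u)" "0 < a" "a < m" "u \<in> Zs n m (min i k)"
    unfolding Ski_mem by blast
  then show "s \<in> swap_instances n m" using Ski_swap(1)[OF i] by blast
qed

lemma Sk_swap: "Sk n m k \<subseteq> swap_instances n m"
  unfolding Sk_def using Ski_sub by blast

lemma card_Ski:
  assumes "i < n" "0 < m"
  shows "card (Ski n m k i) = (m - 1) * m ^ (min i k)"
proof -
  have "inj_on (\<lambda>(a,u). (u[i:=a], u)) ({1..<m} \<times> Zs n m (min i k))"
  proof (rule inj_onI, clarsimp)
    fix a u a' assume u: "u \<in> Zs n m (min i k)" and eq: "u[i := a] = u[i := a']"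
    have "length u = n" using u unfolding Zs_def outcomes_def by simp
    then show "a = a'" using arg_cong[OF eq, of "\<lambda>v. v ! i"] assms by simp
  qed
  then have "card (Ski n m k i) = card ({1..<m} \<times> Zs n m (min i k))" unfolding Ski_def by (rule card_image)
  also have "\<dots> = (m - 1) * m ^ (min i k)" using card_Zs[of "min i k" n m] assms by (simp add: card_cartesian_product)
  finally show ?thesis .
qed

lemma card_Sk:
  assumes "0 < m"
  shows "card (Sk n m k) = (\<Sum>i<n. (m - 1) * m ^ (min i k))"
proof -
  have fin: "finite (Ski n m k i)" if "i < n" for i
    using Ski_sub[OF that] finite_swap by (rule finite_subset)
  have disj: "Ski n m k i \<inter> Ski n m k j = {}" if "i \<noteq> j" "i < n" "j < n" for i j
  proof (rule ccontr)
    assume "Ski n m k i \<inter> Ski n m k j \<noteq> {}"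
    then obtain s where "s \<in> Ski n m k i" "s \<in> Ski n m k j" by blast
    then obtain a u b v where s1: "s = (u[i:=a], u)" "0 < a" "a < m" "u \<in> Zs n m (min i k)"
      and s2: "s = (v[j:=b], v)" "0 < b" "b < m" "v \<in> Zs n m (min j k)"
      unfolding Ski_mem by blast
    have "dvar n (u[i:=a]) u = i" using Ski_swap(2) s1 that by blast
    moreover have "dvar n (v[j:=b]) v = j" using Ski_swap(2) s2 that by blast
    moreover have "v[j:=b] = u[i:=a]" "v = u" using s1(1) s2(1) by auto
    ultimately show False using that by simp
  qed
  have "card (Sk n m k) = (\<Sum>i<n. card (Ski n m k i))"
    unfolding Sk_def by (rule card_UN_disjoint) (use fin disj in auto)
  also have "\<dots> = (\<Sum>i<n. (m - 1) * m ^ (min i k))" using card_Ski assms by simp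
  finally show ?thesis .
qed

lemma geo_nat: "0 < m \<Longrightarrow> (\<Sum>i<k. (m - 1) * m ^ i) = m ^ k - (1::nat)"
proof (induction k)
  case 0 then show ?case by simp
next
  case (Suc k)
  have "1 \<le> m ^ k" using Suc.prems by simp
  then have "m ^ k - 1 + (m - 1) * m ^ k = m * m ^ k - 1" using Suc.prems
    by (simp add: diff_mult_distrib)
  then show ?case using Suc by simp
qed

lemma sum_formula:
  assumes "k < n" "0 < m"
  shows "(\<Sum>i<n. (m - 1) * m ^ (min i k)) = (m - 1) * (n - k) * m ^ k + m ^ k - 1"
proof -
  have "(\<Sum>i<n. (m - 1) * m ^ (min i k)) = (\<Sum>i\<in>{0..<k}. (m - 1) * m ^ (min i k)) + (\<Sum>i\<in>{k..<n}. (m - 1) * m ^ (min i k))"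
    unfolding lessThan_atLeast0 by (rule sum.atLeastLessThan_concat[symmetric]) (use assms in auto)
  also have "(\<Sum>i\<in>{0..<k}. (m - 1) * m ^ (min i k)) = (\<Sum>i<k. (m - 1) * m ^ i)"
    by (simp add: lessThan_atLeast0 min_def)
  also have "(\<Sum>i\<in>{k..<n}. (m - 1) * m ^ (min i k)) = (\<Sum>i\<in>{k..<n}. (m - 1) * m ^ k)"
    by (rule sum.cong) (auto simp: min_def)
  also have "\<dots> = (n - k) * ((m - 1) * m ^ k)" by simp
  finally have "(\<Sum>i<n. (m - 1) * m ^ (min i k)) = (m ^ k - 1) + (n - k) * ((m - 1) * m ^ k)"
    using geo_nat[OF assms(2)] by simp
  moreover have "1 \<le> m ^ k" using assms by simp
  ultimately show ?thesis by (simp add: algebra_simps)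
qed


lemma key_inj:
  fixes p :: "nat \<Rightarrow> bool"
  assumes "(if x = 0 then 0 else if p x then int x else - int x) = (if y = 0 then 0 else if p y then int y else - int y)"
  shows "x = y"
  using assms by (auto split: if_splits)

lemma shatters_Sk:
  assumes "0 < m"
  shows "shatters (acyclic_k_class n m k) (Sk n m k)"
  unfolding shatters_def
proof (intro allI impI)
  fix T assume TS: "T \<subseteq> Sk n m k"
  define z where "z i u = map (\<lambda>j. if j < min i k then u!j else (0::nat)) [0..<n]" for i u
  define key where "key i u a = (if a = 0 then 0 else if ((z i u)[i:=a], z i u) \<in> T then int a else - int a)"
    for i u a
  define c where "c i u = Some (\<lambda>x y. x < m \<and> y < m \<and> key i u y < key i u x)" for i u
  have ex: "\<exists>N. snd N = c \<and> is_cpnet n m N \<and> acyclic_cpnet n N \<and> (\<forall>i<n. fst N i \<subseteq> {..<min i k})"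
  proof (rule mk_cpnet)
    fix i assume "i < n" then show "{..<min i k} \<subseteq> {..<i}" by auto
  next
    fix i u r assume "c i u = Some r"
    then have r: "r = (\<lambda>x y. x < m \<and> y < m \<and> key i u y < key i u x)" unfolding c_def by simp
    have inj: "key i u x = key i u y \<Longrightarrow> x = y" for x y unfolding key_def by (rule key_inj)
    show "strict_total_on m r" unfolding strict_total_on_def r
    proof (intro conjI allI impI)
      fix a b assume "a < m" "b < m" "a \<noteq> b"
      then show "a < m \<and> b < m \<and> key i u b < key i u a \<or> b < m \<and> a < m \<and> key i u a < key i u b"
        using inj[of a b] by linarith
    qed auto
  next
    fix i and u u' :: "nat list" assume ag: "\<forall>j\<in>{..<min i k}. u ! j = u' ! j"
    have "z i u = z i u'" unfolding z_def using ag by auto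
    then show "c i u = c i u'" unfolding c_def key_def by simp
  qed
  then obtain N where N: "snd N = c" "is_cpnet n m N" "acyclic_cpnet n N" and P: "\<forall>i<n. fst N i \<subseteq> {..<min i k}"
    by blast
  have kb: "k_bounded n k N" unfolding k_bounded_def
  proof (intro allI impI)
    fix i assume "i < n"
    then have "card (fst N i) \<le> card {..<min i k}" using P by (intro card_mono) auto
    then show "card (fst N i) \<le> k" by simp
  qed
  have "concept n m N \<inter> Sk n m k = T"
  proof (intro equalityI subsetI)
    fix s assume ss: "s \<in> concept n m N \<inter> Sk n m k"
    then have sc: "s \<in> concept n m N" by blast
    from ss obtain i where i: "i < n" and "s \<in> Ski n m k i" unfolding Sk_def by blast
    then obtain a u where s: "s = (u[i:=a], u)" "0 < a" "a < m" "u \<in> Zs n m (min i k)"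
      unfolding Ski_mem by blast
    have zu: "z i u = u"
    proof -
      have len: "length u = n" using s(4) unfolding Zs_def outcomes_def by simp
      show ?thesis unfolding z_def by (rule nth_equalityI) (use len s(4) in \<open>auto simp: Zs_def\<close>)
    qed
    have ui: "u ! i = 0" using Zs_i0[OF s(4) i] .
    have lenu: "length u = n" using s(4) unfolding Zs_def outcomes_def by simp
    from concept_iff[OF N(2,3) Ski_swap(1)[OF i s(2,3,4)]] sc s Ski_swap(2)[OF i s(2,3,4)]
    have "\<exists>r. c i u = Some r \<and> r a 0" using N(1) ui i lenu by simp
    then have "key i u 0 < key i u a" unfolding c_def by auto
    then show "s \<in> T" using s(1,2) zu unfolding key_def by (auto split: if_splits)
  next
    fix s assume sT: "s \<in> T"
    then have sS: "s \<in> Sk n m k" using TS by blast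
    then obtain i where i: "i < n" and "s \<in> Ski n m k i" unfolding Sk_def by blast
    then obtain a u where s: "s = (u[i:=a], u)" "0 < a" "a < m" "u \<in> Zs n m (min i k)"
      unfolding Ski_mem by blast
    have zu: "z i u = u"
    proof -
      have len: "length u = n" using s(4) unfolding Zs_def outcomes_def by simp
      show ?thesis unfolding z_def by (rule nth_equalityI) (use len s(4) in \<open>auto simp: Zs_def\<close>)
    qed
    have ui: "u ! i = 0" using Zs_i0[OF s(4) i] .
    have lenu: "length u = n" using s(4) unfolding Zs_def outcomes_def by simp
    have "key i u 0 < key i u a" using sT s zu unfolding key_def by auto
    then have "\<exists>r. c i u = Some r \<and> r a 0" unfolding c_def using s(3) assms by auto
    then have "s \<in> concept n m N"
      using concept_iff[OF N(2,3) Ski_swap(1)[OF i s(2,3,4)]] s Ski_swap(2)[OF i s(2,3,4)] N(1) ui i lenu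
      by simp
    then show "s \<in> concept n m N \<inter> Sk n m k" using sS by blast
  qed
  moreover have "concept n m N \<in> acyclic_k_class n m k"
    unfolding acyclic_k_class_def using N kb by blast
  ultimately show "\<exists>c\<in>acyclic_k_class n m k. c \<inter> Sk n m k = T" by blast
qed

lemma VCD_ge:
  assumes "S \<subseteq> swap_instances n m" "shatters C S"
  shows "card S \<le> VCD C (swap_instances n m)"
proof -
  have "{card S | S. S \<subseteq> swap_instances n m \<and> finite S \<and> shatters C S} \<subseteq> card ` Pow (swap_instances n m)"
    by auto
  then have fin: "finite {card S | S. S \<subseteq> swap_instances n m \<and> finite S \<and> shatters C S}"
    using finite_swap by (meson finite_Pow_iff finite_imageI finite_subset)
  have "finite S" using assms(1) finite_swap finite_subset by blast
  then have "card S \<in> {card S | S. S \<subseteq> swap_instances n m \<and> finite S \<and> shatters C S}" using assms by blast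
  then show ?thesis unfolding VCD_def using fin by (rule Max_ge[rotated])
qed

lemma VCD_eq:
  assumes "S \<subseteq> swap_instances n m" "shatters C S" "card S = v"
    and "\<And>S'. S' \<subseteq> swap_instances n m \<Longrightarrow> shatters C S' \<Longrightarrow> card S' \<le> v"
  shows "VCD C (swap_instances n m) = v"
proof -
  have "{card S | S. S \<subseteq> swap_instances n m \<and> finite S \<and> shatters C S} \<subseteq> card ` Pow (swap_instances n m)"
    by auto
  then have fin: "finite {card S | S. S \<subseteq> swap_instances n m \<and> finite S \<and> shatters C S}"
    using finite_swap by (meson finite_Pow_iff finite_imageI finite_subset)
  have "finite S" using assms(1) finite_swap finite_subset by blast
  then have mem: "v \<in> {card S | S. S \<subseteq> swap_instances n m \<and> finite S \<and> shatters C S}" using assms by blast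
  show ?thesis unfolding VCD_def
    by (rule Max_eqI[OF fin _ mem]) (use assms(4) in blast)
qed


theorem corollary1:
  fixes n m k :: nat
  assumes "n \<ge> 1" and "m \<ge> 2" and "k \<le> n - 1"
  shows "VCD (acyclic_k_class n m (n - 1)) (swap_instances n m) = m ^ n - 1 \<and>
         VCD (acyclic_k_class n m 0) (swap_instances n m) = (m - 1) * n \<and>
         VCD (acyclic_k_class n m k) (swap_instances n m) \<ge> (m - 1) * M_k n m k \<and>
         (m - 1) * M_k n m k = (m - 1) * (n - k) * m ^ k + m ^ k - 1"
proof -
  have m0: "0 < m" using assms by simp
  obtain n' where n': "n = Suc n'" using assms(1) by (cases n) auto
  have pk: "1 \<le> m ^ k" using m0 by simp
  have "(\<Sum>i<k. (m - 1) * m ^ i) = (m - 1) * (\<Sum>i<k. m ^ i)" by (simp add: sum_distrib_left)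
  then have d: "(m - 1) dvd (m ^ k - 1)" using geo_nat[OF m0, of k] by (metis dvd_triv_left)
  have Mk: "(m - 1) * M_k n m k = (m - 1) * (n - k) * m ^ k + m ^ k - 1"
  proof -
    have e: "(m - 1) * ((m ^ k - 1) div (m - 1)) = m ^ k - 1" using d by (rule dvd_mult_div_cancel)
    have "(m - 1) * M_k n m k = (m - 1) * (n - k) * m ^ k + (m - 1) * ((m ^ k - 1) div (m - 1))"
      unfolding M_k_def by (simp only: distrib_left mult.assoc)
    then show ?thesis using e pk by simp
  qed
  have kn: "k < n" using assms by simp
  have ck: "card (Sk n m k) = (m - 1) * (n - k) * m ^ k + m ^ k - 1"
    using card_Sk[OF m0] sum_formula[OF kn m0] by simp
  have c1: "card (Sk n m (n - 1)) = m ^ n - 1"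
  proof -
    have "card (Sk n m (n - 1)) = (m - 1) * (n - (n - 1)) * m ^ (n - 1) + m ^ (n - 1) - 1"
      using card_Sk[OF m0] sum_formula[OF _ m0, of "n - 1" n] assms(1) by simp
    also have "\<dots> = (m - 1) * m ^ n' + m ^ n' - 1" using n' by simp
    also have "\<dots> = m ^ n - 1" using n' m0 by (simp add: algebra_simps diff_mult_distrib)
    finally show ?thesis .
  qed
  have c0: "card (Sk n m 0) = (m - 1) * n"
    using card_Sk[OF m0] sum_formula[OF _ m0, of 0 n] assms(1) by simp
  have V1: "VCD (acyclic_k_class n m (n - 1)) (swap_instances n m) = m ^ n - 1"
    by (rule VCD_eq[OF Sk_swap shatters_Sk[OF m0] c1]) (rule ub_general[OF _ _ m0])
  have V0: "VCD (acyclic_k_class n m 0) (swap_instances n m) = (m - 1) * n"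
    by (rule VCD_eq[OF Sk_swap shatters_Sk[OF m0] c0]) (rule ub_sep)
  have Vk: "VCD (acyclic_k_class n m k) (swap_instances n m) \<ge> (m - 1) * M_k n m k"
    using VCD_ge[OF Sk_swap shatters_Sk[OF m0], of n k] ck Mk by simp
  show ?thesis using V1 V0 Vk Mk by blast
qed

end
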